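(* Let $n\ge 1$, let $T_{n+2}$ be a tournament (strong preference pattern) on a set of $n+2$ candidates, let $a,b$ be two of these candidates, and let $T_n=T_{n+2}\setminus\{a,b\}$ be the subtournament induced on the remaining $n$ candidates. Then $v(T_{n+2})\le v(T_n)+2$.
   Context: A voter on a finite candidate set $A$ is a linear order (ranking) of $A$. A set of voters is a nonempty finite multiset of voters. A strong preference pattern on $A$ is a tournament $T$ on vertex set $A$. A set of voters $U$ generates $T$ if for every pair of distinct candidates $x,y$, the arc $(x,y)$ is in $T$ if and only if strictly more voters of $U$ rank $x$ above $y$ than rank $y$ above $x$. For a tournament $T$, $v(T)$ denotes the minimum size of a set of voters generating $T$. *)

theory Defs
  imports Main "HOL-Library.Multiset"
begin

text \<open>A voter on the candidate set A is a linear order (ranking) of A, represented as a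
  list enumerating A without repetition, from most preferred to least preferred.\<close>
definition is_voter :: "'a set \<Rightarrow> 'a list \<Rightarrow> bool" where
  "is_voter A r \<longleftrightarrow> distinct r \<and> set r = A"

definition ranks_above :: "'a list \<Rightarrow> 'a \<Rightarrow> 'a \<Rightarrow> bool" where
  "ranks_above r x y \<longleftrightarrow> (\<exists>i j. i < j \<and> j < length r \<and> r ! i = x \<and> r ! j = y)"

definition is_voter_set :: "'a set \<Rightarrow> 'a list multiset \<Rightarrow> bool" where
  "is_voter_set A U \<longleftrightarrow> U \<noteq> {#} \<and> (\<forall>r \<in># U. is_voter A r)"

definition tournament :: "'a set \<Rightarrow> ('a \<times> 'a) set \<Rightarrow> bool" where
  "tournament A T \<longleftrightarrow> T \<subseteq> A \<times> A \<and> (\<forall>x \<in> A. (x, x) \<notin> T) \<and>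
     (\<forall>x \<in> A. \<forall>y \<in> A. x \<noteq> y \<longrightarrow> ((x, y) \<in> T \<longleftrightarrow> (y, x) \<notin> T))"

definition generates :: "'a set \<Rightarrow> 'a list multiset \<Rightarrow> ('a \<times> 'a) set \<Rightarrow> bool" where
  "generates A U T \<longleftrightarrow> is_voter_set A U \<and>
     (\<forall>x \<in> A. \<forall>y \<in> A. x \<noteq> y \<longrightarrow>
        ((x, y) \<in> T \<longleftrightarrow>
          size (filter_mset (\<lambda>r. ranks_above r y x) U) < size (filter_mset (\<lambda>r. ranks_above r x y) U)))"

definition vnum :: "'a set \<Rightarrow> ('a \<times> 'a) set \<Rightarrow> nat" where
  "vnum A T = (LEAST k. \<exists>U. generates A U T \<and> size U = k)"

end

theory Submission
  imports Defs
begin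

lemma ra_Nil[simp]: "\<not> ranks_above [] x y" by (simp add: ranks_above_def)

lemma ra_Cons[simp]: "ranks_above (z#zs) x y \<longleftrightarrow> (z = x \<and> y \<in> set zs) \<or> ranks_above zs x y"
proof
  assume "ranks_above (z#zs) x y"
  then obtain i j where ij: "i<j" "j < Suc (length zs)" "(z#zs)!i = x" "(z#zs)!j = y"
    by (auto simp: ranks_above_def)
  then obtain j' where j: "j = Suc j'" by (cases j) auto
  show "(z = x \<and> y \<in> set zs) \<or> ranks_above zs x y"
  proof (cases i)
    case 0 then show ?thesis using ij j by auto
  next
    case (Suc i') then show ?thesis using ij j unfolding ranks_above_def by auto
  qed
next
  assume "(z = x \<and> y \<in> set zs) \<or> ranks_above zs x y"
  then show "ranks_above (z#zs) x y"
  proof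
    assume "z = x \<and> y \<in> set zs"
    then obtain j where "j < length zs" "zs ! j = y" by (auto simp: in_set_conv_nth)
    then show ?thesis using \<open>z = x \<and> y \<in> set zs\<close> unfolding ranks_above_def
      by (intro exI[of _ 0] exI[of _ "Suc j"]) auto
  next
    assume "ranks_above zs x y"
    then obtain i j where "i<j" "j < length zs" "zs!i = x" "zs!j = y"
      by (auto simp: ranks_above_def)
    then show ?thesis unfolding ranks_above_def
      by (intro exI[of _ "Suc i"] exI[of _ "Suc j"]) auto
  qed
qed

lemma ra_append[simp]: "ranks_above (xs@ys) x y \<longleftrightarrow> ranks_above xs x y \<or> ranks_above ys x y \<or> (x \<in> set xs \<and> y \<in> set ys)"
  by (induction xs) auto

lemma ra_rev[simp]: "ranks_above (rev xs) x y \<longleftrightarrow> ranks_above xs y x"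
  by (induction xs) auto

lemma ra_set: "ranks_above r x y \<Longrightarrow> x \<in> set r \<and> y \<in> set r"
  by (induction r) auto

lemma ra_total: "x \<in> set r \<Longrightarrow> y \<in> set r \<Longrightarrow> x \<noteq> y \<Longrightarrow> ranks_above r x y \<or> ranks_above r y x"
  by (induction r) auto

lemma ra_asym: "distinct r \<Longrightarrow> ranks_above r x y \<Longrightarrow> \<not> ranks_above r y x"
  by (induction r) (auto dest: ra_set)

lemma ra_notin1: "x \<notin> set r \<Longrightarrow> ranks_above r x y = False"
  by (auto dest: ra_set)

lemma ra_notin2: "y \<notin> set r \<Longrightarrow> ranks_above r x y = False"
  by (auto dest: ra_set)

lemma size_filter_mset_eq: "size (filter_mset P (mset L)) = length (filter P L)"
  by (metis mset_filter size_mset)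

lemma len_filter_map_cong: "(\<And>r. r \<in> set ys \<Longrightarrow> P (f r) \<longleftrightarrow> Q r) \<Longrightarrow> length (filter P (map f ys)) = length (filter Q ys)"
  by (induction ys) auto

lemma tournament_restrict: "tournament A T \<Longrightarrow> B \<subseteq> A \<Longrightarrow> tournament B (T \<inter> (B \<times> B))"
  unfolding tournament_def by blast


lemma odd_reduce:
  assumes gen: "generates B U T" and tour: "tournament B T"
  shows "\<exists>U'. generates B U' T \<and> size U' \<le> size U \<and> odd (size U')"
proof (cases "odd (size U)")
  case True thus ?thesis using gen by blast
next
  case False
  have vs: "is_voter_set B U" using gen by (simp add: generates_def)
  then obtain r where r: "r \<in># U" by (auto simp: is_voter_set_def)
  then obtain U' where U: "U = add_mset r U'" by (metis multi_member_split)
  have ne: "U' \<noteq> {#}" using False U by auto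
  have vot: "\<And>s. s \<in># U \<Longrightarrow> distinct s \<and> set s = B"
    using vs by (auto simp: is_voter_set_def is_voter_def)
  have "generates B U' T"
    unfolding generates_def
  proof (intro conjI ballI impI)
    show "is_voter_set B U'" using vs U ne by (auto simp: is_voter_set_def)
    fix x y assume xy: "x \<in> B" "y \<in> B" "x \<noteq> y"
    define c where "c = size (filter_mset (\<lambda>s. ranks_above s x y) U')"
    define d where "d = size (filter_mset (\<lambda>s. ranks_above s y x) U')"
    have eq: "filter_mset (\<lambda>s. ranks_above s y x) U' = filter_mset (\<lambda>s. \<not> ranks_above s x y) U'"
    proof (rule filter_mset_cong[OF refl])
      fix s assume "s \<in># U'"
      then have "distinct s \<and> set s = B" using vot U by auto
      then show "ranks_above s y x = (\<not> ranks_above s x y)"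
        using ra_total[of x s y] ra_asym[of s x y] xy by auto
    qed
    have cd: "c + d = size U'"
      unfolding c_def d_def eq
      by (metis multiset_partition size_union)
    have rr: "ranks_above r y x \<longleftrightarrow> \<not> ranks_above r x y"
      using vot[OF r] ra_total[of x r y] ra_asym[of r x y] xy by auto
    have g1: "(x,y) \<in> T \<longleftrightarrow> size (filter_mset (\<lambda>s. ranks_above s y x) U) < size (filter_mset (\<lambda>s. ranks_above s x y) U)"
      using gen xy by (simp add: generates_def)
    have g2: "(y,x) \<in> T \<longleftrightarrow> size (filter_mset (\<lambda>s. ranks_above s x y) U) < size (filter_mset (\<lambda>s. ranks_above s y x) U)"
      using gen xy by (simp add: generates_def)
    have t: "(x,y) \<in> T \<longleftrightarrow> (y,x) \<notin> T" using tour xy unfolding tournament_def by blast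
    have ev: "even (c + d + 1)" using False U cd by simp
    show "(x,y) \<in> T \<longleftrightarrow> d < c"
    proof (cases "ranks_above r x y")
      case True
      then have "\<not> ranks_above r y x" using rr by blast
      then have g1': "(x,y) \<in> T \<longleftrightarrow> d < c + 1" and g2': "(y,x) \<in> T \<longleftrightarrow> c + 1 < d"
        using g1 g2 True unfolding U c_def d_def by auto
      show ?thesis using g1' g2' t ev by presburger
    next
      case False
      then have "ranks_above r y x" using rr by blast
      then have g1': "(x,y) \<in> T \<longleftrightarrow> d + 1 < c" and g2': "(y,x) \<in> T \<longleftrightarrow> c < d + 1"
        using g1 g2 False unfolding U c_def d_def by auto
      show ?thesis using g1' g2' t ev by presburger
    qed
  qed
  moreover have "size U' \<le> size U" "odd (size U')" using U False by auto
  ultimately show ?thesis by blast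
qed


lemma ext_gen:
  assumes fin: "finite A" and tour: "tournament A T" and a: "a \<in> A" and b: "b \<in> A" and ab: "a \<noteq> b"
    and gen: "generates (A - {a,b}) U (T \<inter> ((A - {a,b}) \<times> (A - {a,b})))" and odd: "odd (size U)"
  shows "\<exists>U'. generates A U' T \<and> size U' = size U + 2"
proof -
  define B where "B = A - {a,b}"
  have aB: "a \<notin> B" "b \<notin> B" using a b by (auto simp: B_def)
  have AB: "A = insert a (insert b B)" using a b by (auto simp: B_def)
  have finB: "finite B" using fin by (simp add: B_def)
  obtain xs where xs: "mset xs = U" using ex_mset by blast
  have vot: "\<And>r. r \<in> set xs \<Longrightarrow> distinct r \<and> set r = B"
    using gen unfolding xs[symmetric] by (auto simp: generates_def is_voter_set_def is_voter_def B_def)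
  have genB: "\<And>x y. x \<in> B \<Longrightarrow> y \<in> B \<Longrightarrow> x \<noteq> y \<Longrightarrow>
      ((x,y) \<in> T \<longleftrightarrow> length (filter (\<lambda>r. ranks_above r y x) xs) < length (filter (\<lambda>r. ranks_above r x y) xs))"
  proof -
    fix x y assume xy: "x \<in> B" "y \<in> B" "x \<noteq> y"
    have "((x,y) \<in> T \<inter> (B \<times> B) \<longleftrightarrow> size (filter_mset (\<lambda>r. ranks_above r y x) U) < size (filter_mset (\<lambda>r. ranks_above r x y) U))"
      using gen xy unfolding generates_def B_def by blast
    then show "((x,y) \<in> T \<longleftrightarrow> length (filter (\<lambda>r. ranks_above r y x) xs) < length (filter (\<lambda>r. ranks_above r x y) xs))"
      using xy unfolding xs[symmetric] size_filter_mset_eq by blast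
  qed
  have oddl: "odd (length xs)" using odd xs by (metis size_mset)
  define m where "m = length xs div 2"
  obtain r0 ys zs where xs_eq: "xs = r0 # ys @ zs" and lys: "length ys = m" and lzs: "length zs = m"
  proof -
    have ne: "xs \<noteq> []" using oddl by auto
    have lt: "length (tl xs) = 2*m" using oddl unfolding m_def by simp
    show thesis
      apply (rule that[of "hd xs" "take m (tl xs)" "drop m (tl xs)"])
      using ne lt by auto
  qed
  have vr0: "distinct r0" "set r0 = B" using vot xs_eq by auto
  have vys: "\<And>r. r \<in> set ys \<Longrightarrow> distinct r \<and> set r = B" using vot xs_eq by auto
  have vzs: "\<And>r. r \<in> set zs \<Longrightarrow> distinct r \<and> set r = B" using vot xs_eq by auto
  define Sa where "Sa = {x\<in>B. (x,a)\<in>T}"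
  define Sb where "Sb = {x\<in>B. (x,b)\<in>T}"
  obtain X where X: "distinct X" "set X = Sa - Sb"
    using finite_distinct_list[of "Sa - Sb"] finB by (auto simp: Sa_def)
  obtain Y where Y: "distinct Y" "set Y = Sa \<inter> Sb"
    using finite_distinct_list[of "Sa \<inter> Sb"] finB by (auto simp: Sa_def)
  obtain Z where Z: "distinct Z" "set Z = Sb - Sa"
    using finite_distinct_list[of "Sb - Sa"] finB by (auto simp: Sb_def)
  obtain W where W: "distinct W" "set W = B - Sa - Sb"
    using finite_distinct_list[of "B - Sa - Sb"] finB by auto
  have SaB: "Sa \<subseteq> B" and SbB: "Sb \<subseteq> B" by (auto simp: Sa_def Sb_def)
  define v1 where "v1 = X @ Y @ [a] @ Z @ [b] @ W"
  define v2 where "v2 = rev W @ rev Z @ rev Y @ [b] @ rev X @ [a]"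
  define h0 where "h0 = (if (a,b) \<in> T then a#b#r0 else b#a#r0)"
  define L where "L = h0 # map (\<lambda>r. a#b#r) ys @ map (\<lambda>r. r@[b,a]) zs @ [v1,v2]"
  have lenL: "length L = size U + 2"
    using xs_eq lys lzs xs[symmetric] by (simp add: L_def)
  have v1ok: "distinct v1 \<and> set v1 = A"
    using X Y Z W aB ab SaB SbB unfolding v1_def AB by auto
  have v2ok: "distinct v2 \<and> set v2 = A"
    using X Y Z W aB ab SaB SbB unfolding v2_def AB by auto
  have voters: "\<forall>r\<in>set L. distinct r \<and> set r = A"
    using v1ok v2ok vr0 vys vzs aB ab unfolding L_def h0_def AB by auto
  have cnt: "\<And>x y. length (filter (\<lambda>r. ranks_above r x y) L) =
     (if ranks_above h0 x y then 1 else 0)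
     + length (filter (\<lambda>r. (x = a \<and> (y = b \<or> y \<in> B)) \<or> (x = b \<and> y \<in> B) \<or> (x\<in>B \<and> y\<in>B \<and> ranks_above r x y)) ys)
     + length (filter (\<lambda>r. (x \<in> B \<and> y \<in> B \<and> ranks_above r x y) \<or> (x = b \<and> y = a) \<or> (x \<in> B \<and> (y = b \<or> y = a))) zs)
     + (if ranks_above v1 x y then 1 else 0) + (if ranks_above v2 x y then 1 else 0)"
  proof -
    fix x y
    have t1: "length (filter (\<lambda>r. ranks_above r x y) (map (\<lambda>r. a#b#r) ys)) =
        length (filter (\<lambda>r. (x = a \<and> (y = b \<or> y \<in> B)) \<or> (x = b \<and> y \<in> B) \<or> (x\<in>B \<and> y\<in>B \<and> ranks_above r x y)) ys)"
      by (rule len_filter_map_cong) (use vys in \<open>auto dest: ra_set\<close>)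
    have t2: "length (filter (\<lambda>r. ranks_above r x y) (map (\<lambda>r. r@[b,a]) zs)) =
        length (filter (\<lambda>r. (x \<in> B \<and> y \<in> B \<and> ranks_above r x y) \<or> (x = b \<and> y = a) \<or> (x \<in> B \<and> (y = b \<or> y = a))) zs)"
      by (rule len_filter_map_cong) (use vzs in \<open>auto dest: ra_set\<close>)
    show "?thesis x y" unfolding L_def using t1 t2 by simp
  qed
  have gen': "generates A (mset L) T"
    unfolding generates_def size_filter_mset_eq
  proof (intro conjI ballI impI)
    show "is_voter_set A (mset L)" using voters by (auto simp: is_voter_set_def is_voter_def L_def)
    fix x y assume xA: "x \<in> A" and yA: "y \<in> A" and xy: "x \<noteq> y"
    show "(x,y) \<in> T \<longleftrightarrow> length (filter (\<lambda>r. ranks_above r y x) L) < length (filter (\<lambda>r. ranks_above r x y) L)"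
    proof -
      let ?c = "\<lambda>x y. length (filter (\<lambda>r. ranks_above r x y) L)"
      have tT: "\<And>x y. x \<in> A \<Longrightarrow> y \<in> A \<Longrightarrow> x \<noteq> y \<Longrightarrow> (x,y) \<in> T \<longleftrightarrow> (y,x) \<notin> T"
        using tour unfolding tournament_def by blast
      have aA: "a \<in> A" and bA: "b \<in> A" by (fact a, fact b)
      have ca1: "?c a y = m + 1 + (if (y,a)\<in>T then 0 else 1)" and ca2: "?c y a = m + 1 + (if (y,a)\<in>T then 1 else 0)"
        if yB: "y \<in> B" for y
      proof -
        have "y \<noteq> a" "y \<noteq> b" using yB aB by auto
        note ne = this
        have h1: "ranks_above h0 a y" "\<not> ranks_above h0 y a"
          using ne yB vr0 aB ab unfolding h0_def by (auto dest: ra_set)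
        have aX: "a \<notin> set X" "a \<notin> set Y" "a \<notin> set Z" "a \<notin> set W" "b \<notin> set X" "b \<notin> set Y" "b \<notin> set Z" "b \<notin> set W"
          using X Y Z W SaB SbB aB by auto
        have w1: "ranks_above v1 a y \<longleftrightarrow> (y,a) \<notin> T" "\<not> ranks_above v2 a y"
          "ranks_above v1 y a \<longleftrightarrow> (y,a) \<in> T" "ranks_above v2 y a"
        proof -
          have e1: "ranks_above v1 a y \<longleftrightarrow> y \<in> set Z \<or> y \<in> set W"
            using ne ab aX unfolding v1_def by (simp add: ra_notin1)
          have e2: "\<not> ranks_above v2 a y"
            using ne ab aX unfolding v2_def by (simp add: ra_notin1 ra_notin2, blast?)
          have e3: "ranks_above v1 y a \<longleftrightarrow> y \<in> set X \<or> y \<in> set Y"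
            using ne ab aX unfolding v1_def by (simp add: ra_notin1 ra_notin2, blast?)
          have e4: "ranks_above v2 y a \<longleftrightarrow> y \<in> set X \<or> y \<in> set Y \<or> y \<in> set Z \<or> y \<in> set W"
            using ne ab aX unfolding v2_def by (simp add: ra_notin1 ra_notin2, blast?)
          have m1: "y \<in> set Z \<or> y \<in> set W \<longleftrightarrow> (y,a) \<notin> T" using yB Z W unfolding Sa_def Sb_def by auto
          have m2: "y \<in> set X \<or> y \<in> set Y \<longleftrightarrow> (y,a) \<in> T" using yB X Y unfolding Sa_def Sb_def by auto
          have m3: "y \<in> set X \<or> y \<in> set Y \<or> y \<in> set Z \<or> y \<in> set W" using yB X Y Z W by auto
          show "ranks_above v1 a y \<longleftrightarrow> (y,a) \<notin> T" "\<not> ranks_above v2 a y"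
            "ranks_above v1 y a \<longleftrightarrow> (y,a) \<in> T" "ranks_above v2 y a"
            using e1 e2 e3 e4 m1 m2 m3 by blast+
        qed
        show "?c a y = m + 1 + (if (y,a)\<in>T then 0 else 1)" "?c y a = m + 1 + (if (y,a)\<in>T then 1 else 0)"
          using cnt[of a y] cnt[of y a] yB aB ab lys lzs h1 w1 ne by auto
      qed
      have cb1: "?c b y = m + 1 + (if (y,b)\<in>T then 0 else 1)" and cb2: "?c y b = m + 1 + (if (y,b)\<in>T then 1 else 0)"
        if yB: "y \<in> B" for y
      proof -
        have "y \<noteq> a" "y \<noteq> b" using yB aB by auto
        note ne = this
        have h1: "ranks_above h0 b y" "\<not> ranks_above h0 y b"
          using ne yB vr0 aB ab unfolding h0_def by (auto dest: ra_set)
        have aX: "a \<notin> set X" "a \<notin> set Y" "a \<notin> set Z" "a \<notin> set W" "b \<notin> set X" "b \<notin> set Y" "b \<notin> set Z" "b \<notin> set W"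
          using X Y Z W SaB SbB aB by auto
        have e1: "ranks_above v1 b y \<longleftrightarrow> y \<in> set W"
          using ne ab aX unfolding v1_def by (simp add: ra_notin1 ra_notin2, blast?)
        have e2: "ranks_above v2 b y \<longleftrightarrow> y \<in> set X"
          using ne ab aX unfolding v2_def by (simp add: ra_notin1 ra_notin2, blast?)
        have e3: "ranks_above v1 y b \<longleftrightarrow> y \<in> set X \<or> y \<in> set Y \<or> y \<in> set Z"
          using ne ab aX unfolding v1_def by (simp add: ra_notin1 ra_notin2, blast?)
        have e4: "ranks_above v2 y b \<longleftrightarrow> y \<in> set W \<or> y \<in> set Z \<or> y \<in> set Y"
          using ne ab aX unfolding v2_def by (simp add: ra_notin1 ra_notin2, blast?)
        have m1: "(if ranks_above v1 b y then 1 else 0) + (if ranks_above v2 b y then 1 else 0) = (if (y,b) \<in> T then 0 else (1::nat))"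
          using yB X Y Z W e1 e2 unfolding Sa_def Sb_def by auto
        have m2: "(if ranks_above v1 y b then 1 else 0) + (if ranks_above v2 y b then 1 else 0) = (if (y,b) \<in> T then 2 else (1::nat))"
          using yB X Y Z W e3 e4 unfolding Sa_def Sb_def by auto
        show "?c b y = m + 1 + (if (y,b)\<in>T then 0 else 1)" "?c y b = m + 1 + (if (y,b)\<in>T then 1 else 0)"
          using cnt[of b y] cnt[of y b] yB aB ab lys lzs h1 m1 m2 ne by auto
      qed
      have cab1: "?c a b = m + 1 + (if (a,b)\<in>T then 1 else 0)" and cab2: "?c b a = m + 1 + (if (a,b)\<in>T then 0 else 1)"
      proof -
        have h1: "ranks_above h0 a b \<longleftrightarrow> (a,b) \<in> T" "ranks_above h0 b a \<longleftrightarrow> (a,b) \<notin> T"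
          using vr0 aB ab unfolding h0_def by (auto dest: ra_set)
        have aX: "a \<notin> set X" "a \<notin> set Y" "a \<notin> set Z" "a \<notin> set W" "b \<notin> set X" "b \<notin> set Y" "b \<notin> set Z" "b \<notin> set W"
          using X Y Z W SaB SbB aB by auto
        have e: "ranks_above v1 a b" "\<not> ranks_above v2 a b" "\<not> ranks_above v1 b a" "ranks_above v2 b a"
          using ab aX unfolding v1_def v2_def by (simp_all add: ra_notin1 ra_notin2)
        show "?c a b = m + 1 + (if (a,b)\<in>T then 1 else 0)" "?c b a = m + 1 + (if (a,b)\<in>T then 0 else 1)"
          using cnt[of a b] cnt[of b a] aB ab lys lzs h1 e by auto
      qed
      have cBB: "(x,y) \<in> T \<longleftrightarrow> ?c y x < ?c x y" if xB: "x \<in> B" and yB: "y \<in> B" and xy: "x \<noteq> y" for x y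
      proof -
        have ne: "x \<noteq> a" "x \<noteq> b" "y \<noteq> a" "y \<noteq> b" using xB yB aB by auto
        have c1: "?c x y = length (filter (\<lambda>r. ranks_above r x y) xs) + (if ranks_above v1 x y then 1 else 0) + (if ranks_above v2 x y then 1 else 0)"
          using cnt[of x y] ne xB yB by (simp add: xs_eq h0_def)
        have c2: "?c y x = length (filter (\<lambda>r. ranks_above r y x) xs) + (if ranks_above v1 y x then 1 else 0) + (if ranks_above v2 y x then 1 else 0)"
          using cnt[of y x] ne xB yB by (simp add: xs_eq h0_def)
        have r1: "ranks_above v1 x y \<longleftrightarrow> ranks_above v2 y x" 
          using ne unfolding v1_def v2_def by auto
        have r2: "ranks_above v1 y x \<longleftrightarrow> ranks_above v2 x y" 
          using ne unfolding v1_def v2_def by auto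
        show ?thesis using genB[OF xB yB xy] c1 c2 r1 r2 by auto
      qed
      have "x \<in> B \<or> x = a \<or> x = b" "y \<in> B \<or> y = a \<or> y = b" using xA yA AB by auto
      moreover have ?thesis if "x \<in> B" "y \<in> B" using cBB that xy by blast
      moreover have ?thesis if "x \<in> B" "y = a" using ca1[of x] ca2[of x] that by simp
      moreover have ?thesis if "x \<in> B" "y = b" using cb1[of x] cb2[of x] that by simp
      moreover have ?thesis if "x = a" "y \<in> B" using ca1[of y] ca2[of y] that tT[OF xA yA xy] by simp
      moreover have ?thesis if "x = b" "y \<in> B" using cb1[of y] cb2[of y] that tT[OF xA yA xy] by simp
      moreover have ?thesis if "x = a" "y = b" using cab1 cab2 that by simp
      moreover have ?thesis if "x = b" "y = a" using cab1 cab2 that tT[OF xA yA xy] by simp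
      ultimately show ?thesis using xy by blast
    qed
  qed
  then show ?thesis using lenL by (metis size_mset)
qed


lemma exists_gen: "finite A \<Longrightarrow> tournament A T \<Longrightarrow> \<exists>U. generates A U T"
proof (induction "card A" arbitrary: A T rule: less_induct)
  case less
  show ?case
  proof (cases "card A \<le> 1")
    case True
    obtain L where L: "distinct L" "set L = A" using finite_distinct_list[OF less.prems(1)] by blast
    have one: "\<forall>x\<in>A. \<forall>y\<in>A. x = y" using True card_le_Suc0_iff_eq[OF less.prems(1)] by simp
    have "generates A {#L#} T"
      unfolding generates_def is_voter_set_def is_voter_def using L one by auto
    then show ?thesis by blast
  next
    case False
    have "\<not> (\<forall>x\<in>A. \<forall>y\<in>A. x = y)" using False card_le_Suc0_iff_eq[OF less.prems(1)] by simp
    then obtain a b where ab: "a \<in> A" "b \<in> A" "a \<noteq> b" by blast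
    define B where "B = A - {a,b}"
    have "card B = card A - 2" unfolding B_def using ab less.prems(1) by (simp add: card_Diff_subset)
    then have cB: "card B < card A" using False by simp
    have tB: "tournament B (T \<inter> (B \<times> B))" using tournament_restrict[OF less.prems(2)] B_def by blast
    obtain U where U: "generates B U (T \<inter> (B \<times> B))" using less.hyps[OF cB _ tB] less.prems(1) B_def by blast
    obtain U1 where U1: "generates B U1 (T \<inter> (B \<times> B))" "odd (size U1)" using odd_reduce[OF U tB] by blast
    show ?thesis using ext_gen[OF less.prems(1) less.prems(2) ab] U1 B_def by blast
  qed
qed

theorem theorem1:
  fixes A :: "'a set" and T :: "('a \<times> 'a) set" and a b :: 'a and n :: nat
  assumes "n \<ge> 1"
    and "finite A" and "card A = n + 2"
    and "tournament A T"
    and "a \<in> A" and "b \<in> A" and "a \<noteq> b"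
  shows "vnum A T \<le> vnum (A - {a, b}) (T \<inter> ((A - {a, b}) \<times> (A - {a, b}))) + 2"
proof -
  define B where "B = A - {a,b}"
  have tB: "tournament B (T \<inter> (B \<times> B))" using tournament_restrict[OF assms(4)] B_def by blast
  have fB: "finite B" using assms(2) B_def by simp
  obtain U0 where "generates B U0 (T \<inter> (B \<times> B))" using exists_gen[OF fB tB] by blast
  then have "\<exists>k U. generates B U (T \<inter> (B \<times> B)) \<and> size U = k" by blast
  then have "\<exists>U. generates B U (T \<inter> (B \<times> B)) \<and> size U = vnum B (T \<inter> (B \<times> B))"
    unfolding vnum_def by (rule LeastI_ex)
  then obtain U where U: "generates B U (T \<inter> (B \<times> B))" "size U = vnum B (T \<inter> (B \<times> B))" by blast
  obtain U1 where U1: "generates B U1 (T \<inter> (B \<times> B))" "size U1 \<le> size U" "odd (size U1)"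
    using odd_reduce[OF U(1) tB] by blast
  obtain U2 where U2: "generates A U2 T" "size U2 = size U1 + 2"
    using ext_gen[OF assms(2) assms(4) assms(5) assms(6) assms(7)] U1 B_def by blast
  have "vnum A T \<le> size U2" unfolding vnum_def using U2(1) by (intro Least_le) blast
  then show ?thesis using U U1 U2 B_def by simp
qed

end
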